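(* Let $\mathcal{I}$ be an instance of vertex cover and let $\mathcal{T}_S(\mathcal{I})$ be a branch-and-bound tree generated by strong-branching (product score) with worst-bound node selection, ties broken by largest depth. Let $N$ be a node of $\mathcal{T}_S(\mathcal{I})$ whose LP optimal value is less than $\mathrm{OPT}(\mathcal{I})$. Then strong-branching branches at $N$ on some $v\notin I(\mathcal{I},N)$, and both children $N_{v,0}$ and $N_{v,1}$ have LP optimal value at least $\tfrac12$ more than that of $N$.
   Context: Vertex cover IP for a graph $G=(V,E)$: minimize $\sum_v x_v$ subject to $x_u+x_v\ge1$ ($uv\in E$), $x\in\{0,1\}^V$; LP relaxation uses $x\in[0,1]^V$; $\mathrm{OPT}(\mathcal{I})$ is the IP optimal value. Each node $N$ is the LP relaxation plus fixings of variables to $0$ or $1$ made on the path from the root; $N_{v,0},N_{v,1}$ denote the children obtained by adding $x_v=0$, $x_v=1$. The LP solver returns some optimal solution at each node. Strong branching with product score: at $N$ with LP value $z$ and returned solution $\hat x$, for each $j$ with $\hat x_j$ fractional compute children's LP values $z^0_j,z^1_j$ ($+\infty$ if infeasible), $\Delta^-_j=z^0_j-z$, $\Delta^+_j=z^1_j-z$, and branch on a maximizer of $\mathrm{score}_P(j)=\Delta^+_j\Delta^-_j$ (with $0\cdot\infty=0$). Worst-bound rule: process an open node of smallest LP value. $I(\mathcal{I},N)$ is the union, over all optimal solutions $x$ of the LP at $N$, of $\{j:x_j\in\{0,1\}\}$. *)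

theory Defs
  imports Complex_Main "HOL-Library.Extended_Real"
begin

text \<open>Graph G = (V,E): V finite vertex set, E a set of (ordered representatives of)
 edges. A B&B node is the list of fixings (vertex, value) made on the path from the
 root, in order; True means x_v = 1, False means x_v = 0. Depth = length.\<close>

type_synonym 'a node = "('a \<times> bool) list"

definition lp_feas :: "'a set \<Rightarrow> ('a \<times> 'a) set \<Rightarrow> 'a node \<Rightarrow> ('a \<Rightarrow> real) set" where
  "lp_feas V E N = {x. (\<forall>v\<in>V. 0 \<le> x v \<and> x v \<le> 1) \<and> (\<forall>v. v \<notin> V \<longrightarrow> x v = 0)
      \<and> (\<forall>(u,w)\<in>E. x u + x w \<ge> 1)
      \<and> (\<forall>(v,b)\<in>set N. x v = (if b then 1 else 0))}"

text \<open>LP optimal value at N (+\<infinity> if infeasible).\<close>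
definition lp_val :: "'a set \<Rightarrow> ('a \<times> 'a) set \<Rightarrow> 'a node \<Rightarrow> ereal" where
  "lp_val V E N = (INF x\<in>lp_feas V E N. ereal (\<Sum>v\<in>V. x v))"

definition lp_opt :: "'a set \<Rightarrow> ('a \<times> 'a) set \<Rightarrow> 'a node \<Rightarrow> ('a \<Rightarrow> real) \<Rightarrow> bool" where
  "lp_opt V E N x \<longleftrightarrow> x \<in> lp_feas V E N \<and> ereal (\<Sum>v\<in>V. x v) = lp_val V E N"

definition vc_opt :: "'a set \<Rightarrow> ('a \<times> 'a) set \<Rightarrow> ereal" where
  "vc_opt V E = (INF x\<in>{x\<in>lp_feas V E []. \<forall>v\<in>V. x v \<in> {0,1}}. ereal (\<Sum>v\<in>V. x v))"

definition int_set :: "'a set \<Rightarrow> ('a \<times> 'a) set \<Rightarrow> 'a node \<Rightarrow> 'a set" where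
  "int_set V E N = {j\<in>V. \<exists>x. lp_opt V E N x \<and> x j \<in> {0,1}}"

definition fractional :: "real \<Rightarrow> bool" where
  "fractional r \<longleftrightarrow> 0 < r \<and> r < 1"

text \<open>Product score (ereal: 0 * \<infinity> = 0).\<close>
definition sb_score :: "'a set \<Rightarrow> ('a \<times> 'a) set \<Rightarrow> 'a node \<Rightarrow> 'a \<Rightarrow> ereal" where
  "sb_score V E N j =
     (lp_val V E (N @ [(j,True)]) - lp_val V E N) * (lp_val V E (N @ [(j,False)]) - lp_val V E N)"

definition sb_branch :: "'a set \<Rightarrow> ('a \<times> 'a) set \<Rightarrow> 'a node \<Rightarrow> ('a \<Rightarrow> real) \<Rightarrow> 'a \<Rightarrow> bool" where
  "sb_branch V E N xh v \<longleftrightarrow> v \<in> V \<and> fractional (xh v) \<and>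
     (\<forall>j\<in>V. fractional (xh j) \<longrightarrow> sb_score V E N j \<le> sb_score V E N v)"

definition select_node :: "'a set \<Rightarrow> ('a \<times> 'a) set \<Rightarrow> 'a node set \<Rightarrow> 'a node \<Rightarrow> bool" where
  "select_node V E Op N \<longleftrightarrow> N \<in> Op \<and> (\<forall>M\<in>Op. lp_val V E N \<le> lp_val V E M) \<and>
     (\<forall>M\<in>Op. lp_val V E M = lp_val V E N \<longrightarrow> length M \<le> length N)"

text \<open>Reachable states of branch-and-bound: open nodes, incumbent value,
 all created nodes, branching variable of each branched node.\<close>
inductive bb_run :: "'a set \<Rightarrow> ('a \<times> 'a) set \<Rightarrow> 'a node set \<Rightarrow> ereal \<Rightarrow> 'a node set
    \<Rightarrow> ('a node \<Rightarrow> 'a option) \<Rightarrow> bool" for V E where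
  init: "bb_run V E {[]} \<infinity> {[]} (\<lambda>_. None)"
| prune: "bb_run V E Op inc Nd br \<Longrightarrow> select_node V E Op N \<Longrightarrow> inc \<le> lp_val V E N
     \<Longrightarrow> bb_run V E (Op - {N}) inc Nd br"
| integral: "bb_run V E Op inc Nd br \<Longrightarrow> select_node V E Op N \<Longrightarrow> lp_val V E N < inc
     \<Longrightarrow> lp_opt V E N xh \<Longrightarrow> (\<forall>v\<in>V. xh v \<in> {0,1})
     \<Longrightarrow> bb_run V E (Op - {N}) (lp_val V E N) Nd br"
| branch: "bb_run V E Op inc Nd br \<Longrightarrow> select_node V E Op N \<Longrightarrow> lp_val V E N < inc
     \<Longrightarrow> lp_opt V E N xh \<Longrightarrow> \<not> (\<forall>v\<in>V. xh v \<in> {0,1}) \<Longrightarrow> sb_branch V E N xh v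
     \<Longrightarrow> bb_run V E ((Op - {N}) \<union> {N @ [(v,False)], N @ [(v,True)]}) inc
           (Nd \<union> {N @ [(v,False)], N @ [(v,True)]}) (br(N := Some v))"

end

theory Submission
  imports Defs
begin

definition dd :: "real \<Rightarrow> real" where
  "dd t = (if 0 < t \<and> t < 1/2 then 1 else if 1/2 < t \<and> t < 1 then -1 else 0)"
definition g1 :: "real \<Rightarrow> real" where "g1 t = (if t < 1/2 then 1/2 - t else t - 1/2)"
definition g2 :: "real \<Rightarrow> real" where "g2 t = (if t < 1/2 then t else 1 - t)"

lemma pair1:
  fixes a b e :: real
  assumes "a + b \<ge> 1" "0\<le>a" "a\<le>1" "0\<le>b" "b\<le>1" "0<e"
    "dd a \<noteq> 0 \<Longrightarrow> e \<le> g1 a" "dd b \<noteq> 0 \<Longrightarrow> e \<le> g1 b"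
  shows "(a + e * dd a) + (b + e * dd b) \<ge> 1"
  using assms unfolding dd_def g1_def by (auto split: if_splits)

lemma pair2:
  fixes a b e :: real
  assumes "a + b \<ge> 1" "0\<le>a" "a\<le>1" "0\<le>b" "b\<le>1" "0<e"
    "dd a \<noteq> 0 \<Longrightarrow> e \<le> g2 a" "dd b \<noteq> 0 \<Longrightarrow> e \<le> g2 b"
  shows "(a - e * dd a) + (b - e * dd b) \<ge> 1"
  using assms unfolding dd_def g2_def by (auto split: if_splits)

lemma bound1:
  fixes a e :: real
  assumes "0\<le>a" "a\<le>1" "0<e" "dd a \<noteq> 0 \<Longrightarrow> e \<le> g1 a"
  shows "0 \<le> a + e * dd a \<and> a + e * dd a \<le> 1"
  using assms unfolding dd_def g1_def by (auto split: if_splits)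

lemma bound2:
  fixes a e :: real
  assumes "0\<le>a" "a\<le>1" "0<e" "dd a \<noteq> 0 \<Longrightarrow> e \<le> g2 a"
  shows "0 \<le> a - e * dd a \<and> a - e * dd a \<le> 1"
  using assms unfolding dd_def g2_def by (auto split: if_splits)

lemma good1: "dd a \<noteq> 0 \<Longrightarrow> a + g1 a * dd a \<in> {0,1/2,1}"
  unfolding dd_def g1_def by (auto split: if_splits)
lemma good2: "dd a \<noteq> 0 \<Longrightarrow> a - g2 a * dd a \<in> {0,1/2,1}"
  unfolding dd_def g2_def by (auto split: if_splits)
lemma dd0: "0\<le>a \<Longrightarrow> a\<le>1 \<Longrightarrow> dd a = 0 \<longleftrightarrow> a \<in> {0,1/2,1}"
  unfolding dd_def by auto
lemma gpos: "dd a \<noteq> 0 \<Longrightarrow> g1 a > 0 \<and> g2 a > 0"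
  unfolding dd_def g1_def g2_def by (auto split: if_splits)


definition bad :: "'a set \<Rightarrow> ('a \<Rightarrow> real) \<Rightarrow> 'a set" where
  "bad V x = {v\<in>V. x v \<notin> {0,1/2,1}}"

lemma feasD:
  assumes "x \<in> lp_feas V E N"
  shows "\<And>v. v\<in>V \<Longrightarrow> 0 \<le> x v \<and> x v \<le> 1" "\<And>v. v \<notin> V \<Longrightarrow> x v = 0"
    "\<And>u w. (u,w)\<in>E \<Longrightarrow> x u + x w \<ge> 1"
    "\<And>v b. (v,b)\<in>set N \<Longrightarrow> x v = (if b then 1 else 0)"
  using assms unfolding lp_feas_def by auto

lemma round_step:
  assumes fin: "finite V" and EV: "E \<subseteq> V \<times> V" and xf: "x \<in> lp_feas V E N"
    and nb: "bad V x \<noteq> {}"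
  shows "\<exists>x'\<in>lp_feas V E N. sum x' V \<le> sum x V \<and> bad V x' \<subset> bad V x
           \<and> (\<forall>v\<in>V. x v \<in> {0,1/2,1} \<longrightarrow> x' v = x v)"
proof -
  note F = feasD[OF xf]
  define B where "B = bad V x"
  have finB: "finite B" using fin unfolding B_def bad_def by auto
  have Bd: "v \<in> B \<longleftrightarrow> v \<in> V \<and> dd (x v) \<noteq> 0" for v
    using dd0[of "x v"] F(1)[of v] unfolding B_def bad_def by auto
  define d where "d v = (if v \<in> V then dd (x v) else 0)" for v
  have dB: "d v \<noteq> 0 \<longleftrightarrow> v \<in> B" for v using Bd unfolding d_def by auto
  define e1 where "e1 = Min ((\<lambda>v. g1 (x v)) ` B)"
  define e2 where "e2 = Min ((\<lambda>v. g2 (x v)) ` B)"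
  have Bne: "B \<noteq> {}" using nb B_def by simp
  have e1le: "e1 \<le> g1 (x v)" if "v \<in> B" for v unfolding e1_def using finB that by auto
  have e2le: "e2 \<le> g2 (x v)" if "v \<in> B" for v unfolding e2_def using finB that by auto
  have "e1 \<in> (\<lambda>v. g1 (x v)) ` B" unfolding e1_def using finB Bne by (intro Min_in) auto
  then obtain v1 where v1: "v1 \<in> B" "e1 = g1 (x v1)" by blast
  have "e2 \<in> (\<lambda>v. g2 (x v)) ` B" unfolding e2_def using finB Bne by (intro Min_in) auto
  then obtain v2 where v2: "v2 \<in> B" "e2 = g2 (x v2)" by blast
  have e1p: "e1 > 0" using v1 gpos Bd by auto
  have e2p: "e2 > 0" using v2 gpos Bd by auto
  define x1 where "x1 v = x v + e1 * d v" for v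
  define x2 where "x2 v = x v - e2 * d v" for v
  have c1: "dd (x v) \<noteq> 0 \<Longrightarrow> e1 \<le> g1 (x v)" if "v \<in> V" for v using e1le Bd that by auto
  have c2: "dd (x v) \<noteq> 0 \<Longrightarrow> e2 \<le> g2 (x v)" if "v \<in> V" for v using e2le Bd that by auto
  have fix0: "d v = 0" if "(v,b) \<in> set N" for v b
    using F(4)[OF that] unfolding d_def dd_def by auto
  have x1f: "x1 \<in> lp_feas V E N"
    unfolding lp_feas_def
  proof (intro CollectI conjI ballI allI impI)
    fix v assume "v \<in> V"
    then show "0 \<le> x1 v" "x1 v \<le> 1" using bound1[OF _ _ e1p c1] F(1) unfolding x1_def d_def by auto
  next
    fix v assume "v \<notin> V" then show "x1 v = 0" using F(2) unfolding x1_def d_def by auto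
  next
    fix p assume p: "p \<in> E"
    obtain u w where [simp]: "p = (u,w)" by (cases p)
    have "u \<in> V" "w \<in> V" using p EV by auto
    then show "case p of (u,w) \<Rightarrow> 1 \<le> x1 u + x1 w"
      using pair1[OF F(3)[of u w] _ _ _ _ e1p c1 c1] F(1) p unfolding x1_def d_def by auto
  next
    fix p assume p: "p \<in> set N"
    obtain u b where [simp]: "p = (u,b)" by (cases p)
    show "case p of (v,b) \<Rightarrow> x1 v = (if b then 1 else 0)"
      using F(4) fix0 p unfolding x1_def by auto
  qed
  have x2f: "x2 \<in> lp_feas V E N"
    unfolding lp_feas_def
  proof (intro CollectI conjI ballI allI impI)
    fix v assume "v \<in> V"
    then show "0 \<le> x2 v" "x2 v \<le> 1" using bound2[OF _ _ e2p c2] F(1) unfolding x2_def d_def by auto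
  next
    fix v assume "v \<notin> V" then show "x2 v = 0" using F(2) unfolding x2_def d_def by auto
  next
    fix p assume p: "p \<in> E"
    obtain u w where [simp]: "p = (u,w)" by (cases p)
    have "u \<in> V" "w \<in> V" using p EV by auto
    then show "case p of (u,w) \<Rightarrow> 1 \<le> x2 u + x2 w"
      using pair2[OF F(3)[of u w] _ _ _ _ e2p c2 c2] F(1) p unfolding x2_def d_def by auto
  next
    fix p assume p: "p \<in> set N"
    obtain u b where [simp]: "p = (u,b)" by (cases p)
    show "case p of (v,b) \<Rightarrow> x2 v = (if b then 1 else 0)"
      using F(4) fix0 p unfolding x2_def by auto
  qed
  have s1: "sum x1 V = sum x V + e1 * sum d V"
    unfolding x1_def by (simp add: sum.distrib sum_distrib_left)
  have s2: "sum x2 V = sum x V - e2 * sum d V"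
    unfolding x2_def by (simp add: sum_subtractf sum_distrib_left)
  have keep1: "x1 v = x v" if "v \<notin> B" for v using dB[of v] that unfolding x1_def by auto
  have keep2: "x2 v = x v" if "v \<notin> B" for v using dB[of v] that unfolding x2_def by auto
  have b1: "bad V x1 \<subset> B"
  proof -
    have "bad V x1 \<subseteq> B" using keep1 unfolding bad_def B_def by auto
    moreover have "v1 \<notin> bad V x1"
      using good1[of "x v1"] v1 Bd unfolding bad_def x1_def d_def by auto
    ultimately show ?thesis using v1 by auto
  qed
  have b2: "bad V x2 \<subset> B"
  proof -
    have "bad V x2 \<subseteq> B" using keep2 unfolding bad_def B_def by auto
    moreover have "v2 \<notin> bad V x2"
      using good2[of "x v2"] v2 Bd unfolding bad_def x2_def d_def by auto
    ultimately show ?thesis using v2 by auto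
  qed
  have kg: "v \<notin> B" if "v \<in> V" "x v \<in> {0,1/2,1}" for v using that unfolding B_def bad_def by auto
  show ?thesis
  proof (cases "sum d V \<le> 0")
    case True
    then have "sum x1 V \<le> sum x V" using s1 e1p by (simp add: mult_nonneg_nonpos)
    then show ?thesis using x1f b1 keep1 kg B_def by blast
  next
    case False
    then have "sum x2 V \<le> sum x V" using s2 e2p by simp
    then show ?thesis using x2f b2 keep2 kg B_def by blast
  qed
qed


definition hint :: "'a set \<Rightarrow> ('a \<Rightarrow> real) \<Rightarrow> bool" where
  "hint V x \<longleftrightarrow> (\<forall>v\<in>V. x v \<in> {0,1/2,1})"

lemma round:
  assumes fin: "finite V" and EV: "E \<subseteq> V \<times> V"
  shows "x \<in> lp_feas V E N \<Longrightarrow> \<exists>y\<in>lp_feas V E N. hint V y \<and> sum y V \<le> sum x V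
           \<and> (\<forall>v\<in>V. x v \<in> {0,1/2,1} \<longrightarrow> y v = x v)"
proof (induction "card (bad V x)" arbitrary: x rule: less_induct)
  case (less x)
  show ?case
  proof (cases "bad V x = {}")
    case True
    then have "hint V x" unfolding hint_def bad_def by auto
    then show ?thesis using less.prems by blast
  next
    case False
    from round_step[OF fin EV less.prems False] obtain x' where
      x': "x' \<in> lp_feas V E N" "sum x' V \<le> sum x V" "bad V x' \<subset> bad V x"
          "\<forall>v\<in>V. x v \<in> {0,1/2,1} \<longrightarrow> x' v = x v" by blast
    have "finite (bad V x)" using fin unfolding bad_def by auto
    then have "card (bad V x') < card (bad V x)" using x'(3) by (rule psubset_card_mono)
    from less.hyps[OF this x'(1)] obtain y where
      "y\<in>lp_feas V E N" "hint V y" "sum y V \<le> sum x' V" "\<forall>v\<in>V. x' v \<in> {0,1/2,1} \<longrightarrow> y v = x' v"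
      by blast
    then show ?thesis using x' by force
  qed
qed

lemma hint_sum_nat:
  assumes "hint V y"
  shows "\<exists>k::nat. 2 * sum y V = real k"
proof -
  define f where "f v = (if y v = 0 then 0 else if y v = 1/2 then 1 else 2::nat)" for v
  have "2 * y v = real (f v)" if "v \<in> V" for v using assms that unfolding hint_def f_def by auto
  then have "2 * sum y V = real (sum f V)"
    by (simp add: sum_distrib_left of_nat_sum)
  then show ?thesis by blast
qed

lemma opt_char:
  assumes "x \<in> lp_feas V E N" "\<And>z. z \<in> lp_feas V E N \<Longrightarrow> sum x V \<le> sum z V"
  shows "lp_opt V E N x"
proof -
  have "lp_val V E N = ereal (sum x V)"
    unfolding lp_val_def
    by (rule antisym, rule INF_lower2[OF assms(1)], simp, rule INF_greatest, simp add: assms(2))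
  then show ?thesis using assms(1) unfolding lp_opt_def by simp
qed

lemma opt_le:
  assumes "lp_opt V E N x" "z \<in> lp_feas V E N"
  shows "sum x V \<le> sum z V"
proof -
  have "lp_val V E N \<le> ereal (sum z V)" unfolding lp_val_def by (rule INF_lower2[OF assms(2)]) simp
  then show ?thesis using assms(1) unfolding lp_opt_def by (metis ereal_less_eq(3))
qed

lemma attain:
  assumes fin: "finite V" and EV: "E \<subseteq> V \<times> V" and ne: "lp_feas V E N \<noteq> {}"
  shows "\<exists>x. lp_opt V E N x \<and> hint V x"
proof -
  define K where "K = {k::nat. \<exists>y\<in>lp_feas V E N. hint V y \<and> 2 * sum y V = real k}"
  obtain z where z: "z \<in> lp_feas V E N" using ne by blast
  from round[OF fin EV z] obtain y where y: "y\<in>lp_feas V E N" "hint V y" by blast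
  from hint_sum_nat[OF y(2)] obtain k where "2 * sum y V = real k" by blast
  then have "k \<in> K" using y unfolding K_def by blast
  define k0 where "k0 = (LEAST k. k \<in> K)"
  have "k0 \<in> K" unfolding k0_def by (rule LeastI) fact
  then obtain x0 where x0: "x0\<in>lp_feas V E N" "hint V x0" "2 * sum x0 V = real k0"
    unfolding K_def by blast
  have "sum x0 V \<le> sum z V" if zf: "z \<in> lp_feas V E N" for z
  proof -
    from round[OF fin EV zf] obtain y where y: "y\<in>lp_feas V E N" "hint V y" "sum y V \<le> sum z V" by blast
    from hint_sum_nat[OF y(2)] obtain k where k: "2 * sum y V = real k" by blast
    then have "k \<in> K" using y unfolding K_def by blast
    then have "k0 \<le> k" unfolding k0_def by (rule Least_le)
    then show ?thesis using k x0(3) y(3) by linarith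
  qed
  then show ?thesis using opt_char[OF x0(1)] x0(2) by blast
qed

lemma pairU: "a \<in> {0,1/2,1::real} \<Longrightarrow> b \<in> {0,1/2,1} \<Longrightarrow> c \<in> {0,1/2,1} \<Longrightarrow> d \<in> {0,1/2,1}
  \<Longrightarrow> a + b \<ge> 1 \<Longrightarrow> c + d \<ge> 1 \<Longrightarrow>
  (if a \<in> {0,1} then a else c) + (if b \<in> {0,1} then b else d) \<ge> 1"
  by auto

lemma pairW: "a \<in> {0,1/2,1::real} \<Longrightarrow> b \<in> {0,1/2,1} \<Longrightarrow> c \<in> {0,1/2,1} \<Longrightarrow> d \<in> {0,1/2,1}
  \<Longrightarrow> a + b \<ge> 1 \<Longrightarrow> c + d \<ge> 1 \<Longrightarrow>
  (if a = c then a else 1/2) + (if b = d then b else 1/2) \<ge> 1"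
  by auto

lemma identUW: "a \<in> {0,1/2,1::real} \<Longrightarrow> c \<in> {0,1/2,1} \<Longrightarrow>
  (if a \<in> {0,1} then a else c) + (if c \<in> {0,1} then c else a) + 2 * (if a = c then a else 1/2) = 2*a + 2*c"
  by auto


lemma combine:
  assumes EV: "E \<subseteq> V \<times> V" and ox: "lp_opt V E N x" and oy: "lp_opt V E N y"
    and hx: "hint V x" and hy: "hint V y"
  defines "u \<equiv> \<lambda>v. if x v \<in> {0,1} then x v else y v"
  shows "lp_opt V E N u \<and> hint V u \<and> (\<forall>v\<in>V. (x v \<in> {0,1} \<or> y v \<in> {0,1}) \<longrightarrow> u v \<in> {0,1})"
proof -
  have xf: "x \<in> lp_feas V E N" and yf: "y \<in> lp_feas V E N" using ox oy unfolding lp_opt_def by auto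
  note Fx = feasD[OF xf] and Fy = feasD[OF yf]
  define u2 where "u2 v = (if y v \<in> {0,1} then y v else x v)" for v
  define w where "w v = (if x v = y v then x v else 1/2)" for v
  have hxv: "x v \<in> {0,1/2,1}" "y v \<in> {0,1/2,1}" if "v \<in> V" for v using hx hy that unfolding hint_def by auto
  have uf: "u \<in> lp_feas V E N"
    unfolding lp_feas_def
  proof (intro CollectI conjI ballI allI impI)
    fix v assume "v \<in> V"
    then show "0 \<le> u v" "u v \<le> 1" using Fx(1) Fy(1) unfolding u_def by auto
  next
    fix v assume "v \<notin> V" then show "u v = 0" using Fx(2) unfolding u_def by auto
  next
    fix p assume p: "p \<in> E"
    obtain a b where [simp]: "p = (a,b)" by (cases p)
    have "a \<in> V" "b \<in> V" using p EV by auto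
    then show "case p of (a,b) \<Rightarrow> 1 \<le> u a + u b"
      using pairU[OF hxv(1) hxv(1) hxv(2) hxv(2) Fx(3) Fy(3)] p unfolding u_def by auto
  next
    fix p assume p: "p \<in> set N"
    obtain a b where [simp]: "p = (a,b)" by (cases p)
    show "case p of (v,b) \<Rightarrow> u v = (if b then 1 else 0)"
      using Fx(4) p unfolding u_def by auto
  qed
  have u2f: "u2 \<in> lp_feas V E N"
    unfolding lp_feas_def
  proof (intro CollectI conjI ballI allI impI)
    fix v assume "v \<in> V"
    then show "0 \<le> u2 v" "u2 v \<le> 1" using Fx(1) Fy(1) unfolding u2_def by auto
  next
    fix v assume "v \<notin> V" then show "u2 v = 0" using Fy(2) unfolding u2_def by auto
  next
    fix p assume p: "p \<in> E"
    obtain a b where [simp]: "p = (a,b)" by (cases p)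
    have "a \<in> V" "b \<in> V" using p EV by auto
    then show "case p of (a,b) \<Rightarrow> 1 \<le> u2 a + u2 b"
      using pairU[OF hxv(2) hxv(2) hxv(1) hxv(1) Fy(3) Fx(3)] p unfolding u2_def by auto
  next
    fix p assume p: "p \<in> set N"
    obtain a b where [simp]: "p = (a,b)" by (cases p)
    show "case p of (v,b) \<Rightarrow> u2 v = (if b then 1 else 0)"
      using Fy(4) p unfolding u2_def by auto
  qed
  have wf: "w \<in> lp_feas V E N"
    unfolding lp_feas_def
  proof (intro CollectI conjI ballI allI impI)
    fix v assume "v \<in> V"
    then show "0 \<le> w v" "w v \<le> 1" using Fx(1)[of v] unfolding w_def by auto
  next
    fix v assume "v \<notin> V" then show "w v = 0" using Fx(2) Fy(2) unfolding w_def by auto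
  next
    fix p assume p: "p \<in> E"
    obtain a b where [simp]: "p = (a,b)" by (cases p)
    have "a \<in> V" "b \<in> V" using p EV by auto
    then show "case p of (a,b) \<Rightarrow> 1 \<le> w a + w b"
      using pairW[OF hxv(1) hxv(1) hxv(2) hxv(2) Fx(3) Fy(3)] p unfolding w_def by auto
  next
    fix p assume p: "p \<in> set N"
    obtain a b where [simp]: "p = (a,b)" by (cases p)
    show "case p of (v,b) \<Rightarrow> w v = (if b then 1 else 0)"
      using Fx(4) Fy(4) p unfolding w_def by auto
  qed
  have "(\<Sum>v\<in>V. u v + u2 v + 2 * w v) = (\<Sum>v\<in>V. 2 * x v + 2 * y v)"
  proof (rule sum.cong)
    fix v assume "v \<in> V"
    from identUW[OF hxv[OF this]] show "u v + u2 v + 2 * w v = 2 * x v + 2 * y v"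
      unfolding u_def u2_def w_def by simp
  qed simp
  then have id: "sum u V + sum u2 V + 2 * sum w V = 2 * sum x V + 2 * sum y V"
    by (simp add: sum.distrib sum_distrib_left)
  have "ereal (sum x V) = ereal (sum y V)" using ox oy unfolding lp_opt_def by simp
  then have "sum x V = sum y V" by simp
  moreover have "sum x V \<le> sum u2 V" "sum x V \<le> sum w V" using opt_le[OF ox] u2f wf by auto
  ultimately have "sum u V \<le> sum x V" using id by linarith
  then have ou: "lp_opt V E N u"
    using opt_char[OF uf] opt_le[OF ox] by (meson order_trans)
  have "hint V u" using hxv unfolding hint_def u_def by auto
  moreover have "\<forall>v\<in>V. (x v \<in> {0,1} \<or> y v \<in> {0,1}) \<longrightarrow> u v \<in> {0,1}"
    using hxv unfolding u_def by auto
  ultimately show ?thesis using ou by blast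
qed

lemma opt_hint_of_int:
  assumes fin: "finite V" and EV: "E \<subseteq> V \<times> V" and j: "j \<in> int_set V E N"
  shows "\<exists>y. lp_opt V E N y \<and> hint V y \<and> y j \<in> {0,1}"
proof -
  from j obtain x where x: "j \<in> V" "lp_opt V E N x" "x j \<in> {0,1}" unfolding int_set_def by blast
  then have xf: "x \<in> lp_feas V E N" unfolding lp_opt_def by auto
  from round[OF fin EV xf] obtain y where y: "y\<in>lp_feas V E N" "hint V y" "sum y V \<le> sum x V"
    "\<forall>v\<in>V. x v \<in> {0,1/2,1} \<longrightarrow> y v = x v" by blast
  have "lp_opt V E N y" using opt_char[OF y(1)] opt_le[OF x(2)] y(3) by (meson order_trans)
  moreover have "y j \<in> {0,1}" using y(4) x by auto
  ultimately show ?thesis using y(2) by blast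
qed

lemma core:
  assumes fin: "finite V" and EV: "E \<subseteq> V \<times> V" and ne: "lp_feas V E N \<noteq> {}"
    and all: "\<forall>j\<in>V. j \<in> int_set V E N"
  shows "\<exists>x. lp_opt V E N x \<and> (\<forall>v\<in>V. x v \<in> {0,1})"
proof -
  have "K \<subseteq> V \<Longrightarrow> \<exists>x. lp_opt V E N x \<and> hint V x \<and> (\<forall>v\<in>K. x v \<in> {0,1})" for K
  proof (induction K rule: infinite_finite_induct)
    case (infinite A) then show ?case using fin rev_finite_subset by blast
  next
    case empty then show ?case using attain[OF fin EV ne] by blast
  next
    case (insert j K)
    then obtain x where x: "lp_opt V E N x" "hint V x" "\<forall>v\<in>K. x v \<in> {0,1}" by blast
    from insert.prems all have "j \<in> int_set V E N" by auto
    from opt_hint_of_int[OF fin EV this] obtain y where y: "lp_opt V E N y" "hint V y" "y j \<in> {0,1}" by blast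
    from combine[OF EV x(1) y(1) x(2) y(2)] insert.prems x(3) y(3) show ?case
      by (intro exI[of _ "\<lambda>v. if x v \<in> {0,1} then x v else y v"]) auto
  qed
  from this[of V] show ?thesis by blast
qed


lemma ehalf: "ereal c + 1/2 = ereal (c + 1/2)"
  by (simp add: one_ereal_def numeral_eq_ereal ereal_divide)

lemma feas_child: "lp_feas V E (N @ [(j,b)]) \<subseteq> lp_feas V E N"
  unfolding lp_feas_def by auto

lemma val_child: "lp_val V E N \<le> lp_val V E (N @ [(j,b)])"
  unfolding lp_val_def by (rule INF_superset_mono[OF feas_child]) simp

lemma gap:
  assumes fin: "finite V" and EV: "E \<subseteq> V \<times> V" and ox: "lp_opt V E N x" and hx: "hint V x"
    and j: "j \<in> V" "j \<notin> int_set V E N"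
  shows "lp_val V E (N @ [(j,b)]) \<ge> lp_val V E N + 1/2"
proof (cases "lp_feas V E (N @ [(j,b)]) = {}")
  case True
  then have "lp_val V E (N @ [(j,b)]) = \<infinity>" unfolding lp_val_def by (simp add: top_ereal_def)
  then show ?thesis by simp
next
  case False
  from attain[OF fin EV False] obtain y where y: "lp_opt V E (N @ [(j,b)]) y" "hint V y" by blast
  have yf: "y \<in> lp_feas V E (N @ [(j,b)])" using y unfolding lp_opt_def by auto
  then have yN: "y \<in> lp_feas V E N" using feas_child[of V E N j b] by blast
  have le: "sum x V \<le> sum y V" using opt_le[OF ox yN] .
  have yj: "y j \<in> {0,1}" using feasD(4)[OF yf, of j b] by auto
  have ne: "sum x V \<noteq> sum y V"
  proof
    assume "sum x V = sum y V"
    then have "lp_opt V E N y" using opt_char[OF yN] opt_le[OF ox] by simp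
    then have "j \<in> int_set V E N" using j yj unfolding int_set_def by blast
    then show False using j by simp
  qed
  obtain k1 k2 :: nat where k: "2 * sum x V = real k1" "2 * sum y V = real k2"
    using hint_sum_nat[OF hx] hint_sum_nat[OF y(2)] by blast
  have "k1 < k2" using le ne k by simp
  then have "real k1 + 1 \<le> real k2" by linarith
  then have ge: "sum x V + 1/2 \<le> sum y V" using k by linarith
  have e1: "lp_val V E N = ereal (sum x V)" using ox unfolding lp_opt_def by simp
  have e2: "lp_val V E (N @ [(j,b)]) = ereal (sum y V)" using y unfolding lp_opt_def by simp
  show ?thesis unfolding e1 e2 ehalf using ge by simp
qed

lemma score_pos_aux:
  fixes a b :: ereal
  assumes "a \<ge> ereal c + 1/2" "b \<ge> ereal c + 1/2"
  shows "(a - ereal c) * (b - ereal c) > 0"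
  using assms unfolding ehalf by (cases a; cases b) auto


lemma score0:
  assumes "j \<in> int_set V E N"
  shows "sb_score V E N j = 0"
proof -
  from assms obtain x where x: "lp_opt V E N x" "x j \<in> {0,1}" unfolding int_set_def by blast
  have xf: "x \<in> lp_feas V E N" and ev: "lp_val V E N = ereal (sum x V)" using x(1) unfolding lp_opt_def by auto
  have same: "lp_val V E (N @ [(j,b)]) = lp_val V E N" if "x j = (if b then 1 else 0)" for b
  proof -
    have "x \<in> lp_feas V E (N @ [(j,b)])" using xf that unfolding lp_feas_def by auto
    then have "lp_val V E (N @ [(j,b)]) \<le> ereal (sum x V)" unfolding lp_val_def by (rule INF_lower2) simp
    then show ?thesis using val_child[of V E N j b] ev by simp
  qed
  show ?thesis
  proof (cases "x j = 1")
    case True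
    then have "lp_val V E (N @ [(j,True)]) = lp_val V E N" using same[of True] by simp
    then show ?thesis unfolding sb_score_def ev by simp
  next
    case False
    then have "x j = 0" using x(2) by auto
    then have "lp_val V E (N @ [(j,False)]) = lp_val V E N" using same[of False] by simp
    then show ?thesis unfolding sb_score_def ev by simp
  qed
qed

lemma int_vc:
  assumes "lp_opt V E N xh" "\<forall>v\<in>V. xh v \<in> {0,1}"
  shows "vc_opt V E \<le> lp_val V E N"
proof -
  have "xh \<in> lp_feas V E N" and ev: "lp_val V E N = ereal (sum xh V)" using assms(1) unfolding lp_opt_def by auto
  then have "xh \<in> {x\<in>lp_feas V E []. \<forall>v\<in>V. x v \<in> {0,1}}" using assms(2) unfolding lp_feas_def by auto
  then have "vc_opt V E \<le> ereal (sum xh V)" unfolding vc_opt_def by (rule INF_lower2) simp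
  then show ?thesis using ev by simp
qed

lemma inv:
  "bb_run V E Op inc Nd br \<Longrightarrow> vc_opt V E \<le> inc \<and> (\<forall>M\<in>Nd. M \<in> Op \<or>
     (\<exists>v xh. br M = Some v \<and> lp_opt V E M xh \<and> sb_branch V E M xh v) \<or> vc_opt V E \<le> lp_val V E M)"
proof (induction rule: bb_run.induct)
  case init
  then show ?case by simp
next
  case (prune Op inc Nd br N)
  then show ?case by (metis Diff_iff order_trans singletonD)
next
  case (integral Op inc Nd br N xh)
  have "vc_opt V E \<le> lp_val V E N" using int_vc integral by blast
  then show ?case using integral by (metis Diff_iff singletonD)
next
  case (branch Op inc Nd br N xh v)
  then show ?case by auto
qed

theorem lemma3p1:
  fixes V :: "'a set" and E :: "('a \<times> 'a) set"
  assumes "finite V" and "E \<subseteq> V \<times> V" and "\<forall>(u,w)\<in>E. u \<noteq> w"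
    and "bb_run V E {} inc Nodes br"
    and "N \<in> Nodes"
    and "lp_val V E N < vc_opt V E"
  shows "\<exists>v. br N = Some v \<and> v \<notin> int_set V E N
           \<and> lp_val V E (N @ [(v,False)]) \<ge> lp_val V E N + 1/2
           \<and> lp_val V E (N @ [(v,True)]) \<ge> lp_val V E N + 1/2"
proof -
  note fin = assms(1) and EV = assms(2)
  from inv[OF assms(4)] assms(5,6) obtain v xh where
    br: "br N = Some v" "lp_opt V E N xh" "sb_branch V E N xh v" by force
  have ne: "lp_feas V E N \<noteq> {}"
  proof
    assume "lp_feas V E N = {}"
    then have "lp_val V E N = \<infinity>" unfolding lp_val_def by (simp add: top_ereal_def)
    then show False using assms(6) by simp
  qed
  from attain[OF fin EV ne] obtain x0 where x0: "lp_opt V E N x0" "hint V x0" by blast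
  have ev: "lp_val V E N = ereal (sum x0 V)" using x0 unfolding lp_opt_def by simp
  obtain j where j: "j \<in> V" "j \<notin> int_set V E N"
  proof (rule ccontr)
    assume "\<not> thesis"
    then have "\<forall>j\<in>V. j \<in> int_set V E N" using that by blast
    from core[OF fin EV ne this] obtain x where "lp_opt V E N x" "\<forall>v\<in>V. x v \<in> {0,1}" by blast
    from int_vc[OF this] assms(6) show False by simp
  qed
  have xhf: "xh \<in> lp_feas V E N" using br unfolding lp_opt_def by simp
  have "xh j \<notin> {0,1}" using j br(2) unfolding int_set_def by blast
  then have fj: "fractional (xh j)" using feasD(1)[OF xhf j(1)] unfolding fractional_def by auto
  have "sb_score V E N j > 0"
    unfolding sb_score_def ev
    by (rule score_pos_aux; rule gap[OF fin EV x0(1) x0(2) j, unfolded ev])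
  then have "sb_score V E N v > 0" using br(3) fj j(1) unfolding sb_branch_def by (meson less_le_trans)
  then have vI: "v \<notin> int_set V E N" using score0 by force
  have vV: "v \<in> V" using br(3) unfolding sb_branch_def by simp
  show ?thesis using br(1) vI gap[OF fin EV x0(1) x0(2) vV vI] by blast
qed

end
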